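(* Fix integers $n,k\ge1$ and let $E=\mathbb Z[q]/(\Phi_n(q)^k)$ and $G=\mathbb Z[e_n][x]/(x^k)$. Then: (a) $E$ and $G$ are free $\mathbb Z$-modules of the same rank $k\varphi(n)$. (b) The algebra homomorphism $\mathbb Z[q]\to\mathbb Z[e_n][x]$, $q\mapsto e_n+x$, descends to an algebra homomorphism $h:E\to G$, and $h$ is injective.
   Context: $\Phi_n(q)$ is the $n$th cyclotomic polynomial, $\varphi$ is Euler's totient function, and $e_n=\exp(2\pi i/n)$. *)

theory Defs
  imports "HOL-Analysis.Analysis" "HOL-Computational_Algebra.Polynomial" "HOL-Number_Theory.Totient"
begin

definition e_n :: "nat \<Rightarrow> complex" where
  "e_n n = exp (2 * of_real pi * \<i> / of_nat n)"

definition cyclo_C :: "nat \<Rightarrow> complex poly" where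
  "cyclo_C n = (\<Prod>j\<in>{j. 1 \<le> j \<and> j \<le> n \<and> coprime j n}. [:- (e_n n ^ j), 1:])"

definition cyclo :: "nat \<Rightarrow> int poly" where
  "cyclo n = (THE p. map_poly of_int p = cyclo_C n)"

definition Zen :: "nat \<Rightarrow> complex set" where
  "Zen n = {z. \<exists>p :: int poly. z = poly (map_poly of_int p) (e_n n)}"

definition Zen_poly :: "nat \<Rightarrow> complex poly set" where
  "Zen_poly n = {p. \<forall>i. coeff p i \<in> Zen n}"

text \<open>The quotient A/I (A a ring, I an ideal of A) is a free Z-module of rank r:
  there are b_0,...,b_{r-1} in A whose classes span A/I over Z and are Z-linearly independent in A/I.\<close>
definition quotient_free_Z_rank :: "'a::comm_ring_1 set \<Rightarrow> 'a set \<Rightarrow> nat \<Rightarrow> bool" where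
  "quotient_free_Z_rank A I r \<longleftrightarrow>
     (\<exists>b :: nat \<Rightarrow> 'a. (\<forall>i<r. b i \<in> A)
        \<and> (\<forall>a\<in>A. \<exists>c :: nat \<Rightarrow> int. a - (\<Sum>i<r. of_int (c i) * b i) \<in> I)
        \<and> (\<forall>c :: nat \<Rightarrow> int. (\<Sum>i<r. of_int (c i) * b i) \<in> I \<longrightarrow> (\<forall>i<r. c i = 0)))"

definition ideal_E :: "nat \<Rightarrow> nat \<Rightarrow> int poly set" where
  "ideal_E n k = {cyclo n ^ k * s | s. True}"

definition ideal_G :: "nat \<Rightarrow> nat \<Rightarrow> complex poly set" where
  "ideal_G n k = {monom 1 k * s | s. s \<in> Zen_poly n}"

definition hom0 :: "nat \<Rightarrow> int poly \<Rightarrow> complex poly" where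
  "hom0 n p = pcompose (map_poly of_int p) [:e_n n, 1:]"

end

theory Submission
  imports Defs "HOL-Computational_Algebra.Computational_Algebra"
begin


lemma mpi_add: "map_poly (of_int::int\<Rightarrow>'a::comm_ring_1) (p + q) = map_poly of_int p + map_poly of_int q"
  by (rule poly_eqI) (simp add: coeff_map_poly)
lemma mpi_diff: "map_poly (of_int::int\<Rightarrow>'a::comm_ring_1) (p - q) = map_poly of_int p - map_poly of_int q"
  by (rule poly_eqI) (simp add: coeff_map_poly)
lemma mpi_mult: "map_poly (of_int::int\<Rightarrow>'a::comm_ring_1) (p * q) = map_poly of_int p * map_poly of_int q"
  by (rule poly_eqI) (simp add: coeff_map_poly coeff_mult)
lemma mpi_1: "map_poly (of_int::int\<Rightarrow>'a::comm_ring_1) 1 = 1"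
  by simp
lemma mpi_power: "map_poly (of_int::int\<Rightarrow>'a::comm_ring_1) (p ^ m) = map_poly of_int p ^ m"
  by (induction m) (simp_all add: mpi_mult)
lemma mpi_const: "map_poly (of_int::int\<Rightarrow>'a::comm_ring_1) [:c:] = [:of_int c:]"
  by (rule poly_eqI) (simp add: coeff_map_poly coeff_pCons split: nat.split)
lemma mpi_monom: "map_poly (of_int::int\<Rightarrow>'a::comm_ring_1) (monom c m) = monom (of_int c) m"
  by (simp add: map_poly_monom)
lemma mpi_pCons: "map_poly (of_int::int\<Rightarrow>'a::comm_ring_1) (pCons a p) = pCons (of_int a) (map_poly of_int p)"
  by (rule poly_eqI) (simp add: coeff_map_poly coeff_pCons split: nat.split)
lemma mpi_of_nat: "map_poly (of_int::int\<Rightarrow>'a::comm_ring_1) (of_nat m) = of_nat m"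
  by (rule poly_eqI) (simp add: coeff_map_poly of_nat_poly coeff_pCons split: nat.split)
lemma mpi_pderiv: "map_poly (of_int::int\<Rightarrow>'a::idom) (pderiv p) = pderiv (map_poly of_int p)"
  by (rule poly_eqI) (simp add: coeff_map_poly coeff_pderiv)
lemma mpi_inj: "map_poly (of_int::int\<Rightarrow>'a::{comm_ring_1,ring_char_0}) p = map_poly of_int q \<Longrightarrow> p = q"
  by (metis (no_types, lifting) coeff_map_poly of_int_0 of_int_eq_iff poly_eqI)
lemma degree_mpi: "degree (map_poly (of_int::int\<Rightarrow>'a::{comm_ring_1,ring_char_0}) p) = degree p"
  by (simp add: degree_map_poly)

lemma frob_ring:
  fixes a b :: "'a::comm_ring_1"
  assumes "prime (l::nat)"
  shows "\<exists>w. (a + b) ^ l = a ^ l + b ^ l + of_nat l * w"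
proof -
  have l: "l > 1" using assms prime_gt_1_nat by blast
  define g where "g k = of_nat (l choose k) * a ^ k * b ^ (l - k)" for k
  have "(a + b) ^ l = (\<Sum>k\<le>l. g k)" unfolding g_def binomial_ring by simp
  also have "{..l} = {0, l} \<union> {1..<l}" using l by auto
  also have "sum g ({0, l} \<union> {1..<l}) = sum g {0, l} + sum g {1..<l}"
    by (rule sum.union_disjoint) auto
  also have "sum g {0, l} = a ^ l + b ^ l" using l by (simp add: g_def)
  also have "sum g {1..<l} = of_nat l * (\<Sum>k\<in>{1..<l}. of_nat ((l choose k) div l) * a ^ k * b ^ (l - k))"
    unfolding sum_distrib_left
  proof (rule sum.cong)
    fix k assume k: "k \<in> {1..<l}"
    have "l dvd l choose k" using k l assms by (intro dvd_choose_prime) auto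
    then have "l choose k = l * ((l choose k) div l)" by simp
    then show "g k = of_nat l * (of_nat ((l choose k) div l) * a ^ k * b ^ (l - k))"
      unfolding g_def by (metis (no_types, lifting) mult.assoc of_nat_mult)
  qed simp
  finally show ?thesis by blast
qed

lemma fermat_int:
  assumes "prime (l::nat)"
  shows "int l dvd a ^ l - a"
proof -
  have nat_case: "int l dvd int m ^ l - int m" for m :: nat
  proof (induction m)
    case 0 then show ?case using assms prime_gt_0_nat by (simp add: power_0_left)
  next
    case (Suc m)
    obtain w where w: "(int m + 1) ^ l = int m ^ l + 1 ^ l + of_nat l * w"
      using frob_ring[OF assms] by blast
    have "int (Suc m) ^ l - int (Suc m) = (int m ^ l - int m) + int l * w"
      using w by (simp add: algebra_simps)
    moreover have "int l dvd (int m ^ l - int m) + int l * w" using Suc.IH by simp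
    ultimately show ?case by metis
  qed
  show ?thesis
  proof (cases "a \<ge> 0")
    case True then show ?thesis using nat_case[of "nat a"] by simp
  next
    case False
    define b where "b = nat (- a)"
    have a: "a = - int b" using False b_def by simp
    obtain w where w: "(- int b + int b) ^ l = (- int b) ^ l + int b ^ l + of_nat l * w"
      using frob_ring[OF assms] by blast
    have "(- int b) ^ l = - (int b ^ l) - int l * w" using w assms prime_gt_0_nat by (simp add: power_0_left)
    then have "a ^ l - a = - (int b ^ l - int b) - int l * w" using a by simp
    moreover have "int l dvd - (int b ^ l - int b) - int l * w"
      using nat_case[of b] by (intro dvd_diff) (simp_all only: dvd_minus_iff dvd_triv_left)
    ultimately show ?thesis by metis
  qed
qed

lemma frob_poly:
  fixes p :: "int poly"
  assumes "prime (l::nat)"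
  shows "\<exists>h. p ^ l = pcompose p (monom 1 l) + of_nat l * h"
proof (induction p)
  case 0
  then show ?case using assms prime_gt_0_nat by (auto simp: power_0_left intro: exI[of _ 0])
next
  case (pCons a p)
  then obtain h where h: "p ^ l = pcompose p (monom 1 l) + of_nat l * h" by blast
  have e: "pCons a p = [:a:] + [:0,1:] * p" by simp
  obtain w where w: "([:a:] + [:0,1:] * p) ^ l = [:a:] ^ l + ([:0,1:] * p) ^ l + of_nat l * w"
    using frob_ring[OF assms] by blast
  obtain t where t: "a ^ l - a = int l * t" using fermat_int[OF assms, of a] by (auto elim: dvdE)
  have xl: "[:0,1:] ^ l = (monom 1 l :: int poly)" by (simp add: monom_altdef)
  have cpow: "[:a:] ^ l = [:a ^ l:]" by (induction l) auto
  have "pCons a p ^ l = [:a ^ l:] + monom 1 l * (pcompose p (monom 1 l) + of_nat l * h) + of_nat l * w"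
    by (subst e, subst w, simp only: power_mult_distrib xl cpow h)
  also have "[:a ^ l:] = [:a:] + of_nat l * [:t:]"
  proof -
    have "a ^ l = a + int l * t" using t by simp
    then show ?thesis by (simp add: of_nat_poly)
  qed
  finally have "pCons a p ^ l = ([:a:] + monom 1 l * pcompose p (monom 1 l)) + of_nat l * ([:t:] + monom 1 l * h + w)"
    by (simp add: algebra_simps)
  moreover have "pcompose (pCons a p) (monom 1 l) = [:a:] + monom 1 l * pcompose p (monom 1 l)"
    by (simp add: pcompose_pCons)
  ultimately show ?case by auto
qed



abbreviation ev :: "int poly \<Rightarrow> complex \<Rightarrow> complex" where
  "ev p z \<equiv> poly (map_poly of_int p) z"

lemma mpi_smult: "map_poly (of_int::int\<Rightarrow>'a::comm_ring_1) (smult c p) = smult (of_int c) (map_poly of_int p)"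
  by (rule poly_eqI) (simp add: coeff_map_poly)

lemma ev_simps: "ev (p + q) z = ev p z + ev q z" "ev (p - q) z = ev p z - ev q z"
  "ev (p * q) z = ev p z * ev q z" "ev (smult c p) z = of_int c * ev p z" "ev 1 z = 1"
  "ev (p ^ m) z = ev p z ^ m" "ev (monom c m) z = of_int c * z ^ m" "ev [:c:] z = of_int c"
  "ev (of_nat m) z = of_nat m" "ev 0 z = 0"
  by (simp_all add: mpi_add mpi_diff mpi_mult mpi_smult mpi_power mpi_monom poly_monom mpi_const mpi_of_nat)

lemma minpoly_exists:
  fixes \<eta> :: complex and n :: nat
  assumes "\<eta> ^ n = 1" "n \<ge> 1"
  obtains f :: "int poly" where "lead_coeff f = 1" "ev f \<eta> = 0"
    "\<And>r. r \<noteq> 0 \<Longrightarrow> ev r \<eta> = 0 \<Longrightarrow> degree f \<le> degree r"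
    "\<And>p. ev p \<eta> = 0 \<Longrightarrow> f dvd p"
proof -
  define X :: "int poly" where "X = monom 1 n - 1"
  have cX: "coeff X n = 1" using assms(2) by (simp add: X_def coeff_monom)
  have X0: "X \<noteq> 0" using cX by auto
  have degX: "degree X = n"
  proof (rule antisym)
    show "degree X \<le> n" unfolding X_def by (rule degree_diff_le) (auto simp: degree_monom_le)
    show "n \<le> degree X" using cX by (intro le_degree) simp
  qed
  have lcX: "lead_coeff X = 1" using cX degX by simp
  have evX: "ev X \<eta> = 0" using assms(1) by (simp add: X_def ev_simps)
  define P where "P d \<longleftrightarrow> (\<exists>r. r \<noteq> 0 \<and> ev r \<eta> = 0 \<and> degree r = d)" for d
  have PX: "P (degree X)" using X0 evX P_def by blast
  define d where "d = (LEAST d. P d)"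
  have "P d" unfolding d_def using PX by (rule LeastI)
  then obtain m where m: "m \<noteq> 0" "ev m \<eta> = 0" "degree m = d" using P_def by blast
  have mini: "d \<le> degree r" if "r \<noteq> 0" "ev r \<eta> = 0" for r
    unfolding d_def using that P_def by (intro Least_le) blast
  define f0 where "f0 = primitive_part m"
  have m_eq: "m = smult (content m) f0" by (simp add: f0_def content_times_primitive_part)
  have cm: "content m \<noteq> 0" using m(1) by simp
  have f00: "f0 \<noteq> 0" using m(1) m_eq by auto
  have evf0: "ev f0 \<eta> = 0" using m(2) cm by (subst (asm) m_eq) (simp add: ev_simps)
  have degf0: "degree f0 = d" using m(3) by (simp add: f0_def degree_primitive_part)
  have cf0: "content f0 = 1" using m(1) by (simp add: f0_def content_primitive_part)
  have dvd0: "f0 dvd p" if evp: "ev p \<eta> = 0" for p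
  proof -
    obtain q r where pd: "pseudo_divmod p f0 = (q, r)" by fastforce
    define c where "c = lead_coeff f0 ^ (Suc (degree p) - degree f0)"
    have c0: "c \<noteq> 0" using f00 by (simp add: c_def)
    from pseudo_divmod[OF f00 pd] have eq: "smult c p = f0 * q + r" and rd: "r = 0 \<or> degree r < degree f0"
      by (simp_all add: c_def)
    have "ev r \<eta> = ev (smult c p) \<eta> - ev (f0 * q) \<eta>" using eq by (simp add: ev_simps)
    then have evr: "ev r \<eta> = 0" using evp evf0 by (simp add: ev_simps)
    have r0: "r = 0"
    proof (rule ccontr)
      assume "r \<noteq> 0"
      then have "d \<le> degree r" "degree r < d" using mini evr rd degf0 by auto
      then show False by simp
    qed
    then have "f0 dvd smult c p" using eq by simp
    then have "fract_poly f0 dvd fract_poly (smult c p)" by (rule fract_poly_dvd)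
    then have "fract_poly f0 dvd smult (to_fract c) (fract_poly p)" by simp
    then have "fract_poly f0 dvd fract_poly p" using c0 by (simp add: dvd_smult_iff)
    then show "f0 dvd p" using cf0 by (rule fract_poly_dvdD)
  qed
  obtain g where g: "X = f0 * g" using dvd0[OF evX] by (elim dvdE)
  have "lead_coeff f0 * lead_coeff g = 1" using lcX g by (simp add: lead_coeff_mult)
  then have u: "lead_coeff f0 = 1 \<or> lead_coeff f0 = -1" by (rule pos_zmult_eq_1_iff_lemma)
  define f where "f = smult (lead_coeff f0) f0"
  have lcf: "lead_coeff f = 1" using u by (auto simp: f_def lead_coeff_smult)
  have f0f: "f0 = smult (lead_coeff f0) f" using u by (auto simp: f_def)
  have evf: "ev f \<eta> = 0" using evf0 by (simp add: f_def ev_simps)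
  have degf: "degree f = d" using u degf0 by (auto simp: f_def)
  show ?thesis
  proof (rule that[OF lcf evf])
    fix r assume "r \<noteq> 0" "ev r \<eta> = 0"
    then show "degree f \<le> degree r" using mini degf by simp
  next
    fix p assume "ev p \<eta> = 0"
    then have "f0 dvd p" by (rule dvd0)
    moreover have "f dvd f0" by (subst f0f) (rule dvd_smult, rule dvd_refl)
    ultimately show "f dvd p" using dvd_trans by blast
  qed
qed



lemma mpi_pcompose: "map_poly (of_int::int\<Rightarrow>'a::comm_ring_1) (pcompose p q) = pcompose (map_poly of_int p) (map_poly of_int q)"
  by (induction p) (simp_all add: pcompose_pCons mpi_pCons mpi_add mpi_mult mpi_const)

lemma ev_pcompose: "ev (pcompose p q) z = ev p (ev q z)"
  by (simp add: mpi_pcompose poly_pcompose)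

lemma conj_prime:
  fixes \<eta> :: complex and n l :: nat and f :: "int poly"
  assumes eta: "\<eta> ^ n = 1" and n: "n \<ge> 1" and lcf: "lead_coeff f = 1" and evf: "ev f \<eta> = 0"
    and mini: "\<And>r. r \<noteq> 0 \<Longrightarrow> ev r \<eta> = 0 \<Longrightarrow> degree f \<le> degree r"
    and dv: "\<And>p. ev p \<eta> = 0 \<Longrightarrow> f dvd p"
    and l: "prime l" and ln: "\<not> l dvd n"
  shows "ev f (\<eta> ^ l) = 0"
proof (rule ccontr)
  assume nz: "ev f (\<eta> ^ l) \<noteq> 0"
  define X :: "int poly" where "X = monom 1 n - 1"
  have evX: "ev X z = z ^ n - 1" for z by (simp add: X_def ev_simps)
  obtain g where g: "X = f * g" using dv[of X] evX eta by (auto elim: dvdE)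
  have "(\<eta> ^ l) ^ n = (\<eta> ^ n) ^ l" by (metis power_mult mult.commute)
  then have "ev X (\<eta> ^ l) = 0" using evX eta by simp
  then have evg: "ev g (\<eta> ^ l) = 0" using nz g by (simp add: ev_simps)
  obtain h where h: "g ^ l = pcompose g (monom 1 l) + of_nat l * h" using frob_poly[OF l] by blast
  have G: "ev g \<eta> ^ l = of_nat l * ev h \<eta>"
    using arg_cong[OF h, of "\<lambda>p. ev p \<eta>"] evg by (simp add: ev_simps ev_pcompose)
  have "pderiv X = f * pderiv g + g * pderiv f" using g by (simp add: pderiv_mult)
  then have "ev (pderiv X) \<eta> = ev g \<eta> * ev (pderiv f) \<eta>" using evf by (simp add: ev_simps)
  moreover have "ev (pderiv X) \<eta> = of_nat n * \<eta> ^ (n - 1)"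
    by (simp add: X_def pderiv_diff pderiv_monom pderiv_1 ev_simps)
  ultimately have D: "of_nat n * \<eta> ^ (n - 1) = ev g \<eta> * ev (pderiv f) \<eta>" by simp
  define Q where "Q = monom 1 l * h * pderiv f ^ l"
  have "\<eta> ^ l * \<eta> ^ ((n - 1) * l) = 1"
  proof -
    have "l + (n - 1) * l = n * l" using n by (cases n) auto
    then have "\<eta> ^ l * \<eta> ^ ((n - 1) * l) = (\<eta> ^ n) ^ l" by (metis power_add power_mult)
    then show ?thesis using eta by simp
  qed
  then have "of_nat (n ^ l) = \<eta> ^ l * (of_nat n * \<eta> ^ (n - 1)) ^ l"
    by (simp add: power_mult_distrib power_mult[symmetric] mult.commute del: power_mult)
  also have "\<dots> = \<eta> ^ l * ev g \<eta> ^ l * ev (pderiv f) \<eta> ^ l" using D by (simp add: power_mult_distrib)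
  also have "\<dots> = of_nat l * ev Q \<eta>" using G by (simp add: Q_def ev_simps)
  finally have NQ: "of_nat (n ^ l) = of_nat l * ev Q \<eta>" .
  have f0: "f \<noteq> 0" using lcf by auto
  obtain s r where pd: "pseudo_divmod Q f = (s, r)" by fastforce
  from pseudo_divmod[OF f0 pd] lcf have eq: "Q = f * s + r" and rd: "r = 0 \<or> degree r < degree f"
    by simp_all
  have "ev Q \<eta> = ev r \<eta>" using eq evf by (simp add: ev_simps)
  define R where "R = smult (int l) r - [:int n ^ l:]"
  have evR: "ev R \<eta> = 0" using NQ \<open>ev Q \<eta> = ev r \<eta>\<close> by (simp add: R_def ev_simps)
  have degf: "degree f \<noteq> 0"
  proof
    assume "degree f = 0"
    then have "f = [:1:]" using lcf by (metis degree_0_id)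
    then show False using evf by (simp add: ev_simps)
  qed
  have R0: "R = 0"
  proof (rule ccontr)
    assume "R \<noteq> 0"
    then have "degree f \<le> degree R" using mini evR by blast
    moreover have "degree R \<le> max (degree (smult (int l) r)) (degree [:int n ^ l:])"
      unfolding R_def by (rule degree_diff_le_max)
    moreover have "degree (smult (int l) r) \<le> degree r" by (rule degree_smult_le)
    ultimately show False using rd degf by auto
  qed
  have "coeff R 0 = 0" using R0 by simp
  then have "int l * coeff r 0 = int n ^ l" by (simp add: R_def)
  then have "int l dvd int n ^ l" by (metis dvd_triv_left)
  then have "l dvd n ^ l" by (metis of_nat_dvd_iff of_nat_power)
  then have "l dvd n" using l prime_dvd_power_nat by blast
  then show False using ln by simp
qed



lemma en_pow: "e_n n ^ j = exp (2 * of_real pi * \<i> * of_nat j / of_nat n)"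
  unfolding e_n_def exp_of_nat_mult[symmetric] by (simp add: field_simps)

lemma en_n: "n \<ge> 1 \<Longrightarrow> e_n n ^ n = 1"
  by (simp add: en_pow complex_root_unity_eq_1)

lemma en_eq1: "n \<ge> 1 \<Longrightarrow> e_n n ^ j = 1 \<longleftrightarrow> n dvd j"
  by (simp add: en_pow complex_root_unity_eq_1)

lemma en_eq: "n \<ge> 1 \<Longrightarrow> e_n n ^ i = e_n n ^ j \<longleftrightarrow> i mod n = j mod n"
  by (simp add: en_pow complex_root_unity_eq)

lemma en_roots:
  assumes n: "n \<ge> 1" and z: "z ^ n = 1"
  shows "\<exists>j<n. z = e_n n ^ j"
proof -
  have fin: "finite {z::complex. z ^ n = 1}" using n by (intro finite_roots_unity) auto
  have card: "card {..<n} = card {z::complex. z ^ n = 1}" using n by (simp add: card_roots_unity_eq)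
  have sub: "(\<lambda>j. e_n n ^ j) ` {..<n} \<subseteq> {z. z ^ n = 1}"
  proof
    fix y assume "y \<in> (\<lambda>j. e_n n ^ j) ` {..<n}"
    then obtain j where "y = e_n n ^ j" by auto
    then have "y ^ n = (e_n n ^ n) ^ j" by (metis power_mult mult.commute)
    then show "y \<in> {z. z ^ n = 1}" using en_n[OF n] by simp
  qed
  have "inj_on (\<lambda>j. e_n n ^ j) {..<n}"
    by (auto simp: inj_on_def en_eq[OF n])
  then have "\<forall>y\<in>{z. z ^ n = 1}. \<exists>x\<in>{..<n}. e_n n ^ x = y"
    using surjective_iff_injective_gen[OF _ fin card sub] by auto
  then show ?thesis using z by force
qed

lemma conj_all:
  fixes \<eta> :: complex and f :: "int poly"
  assumes eta: "\<eta> ^ n = 1" and n: "n \<ge> 1" and evf: "ev f \<eta> = 0"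
  shows "coprime j n \<Longrightarrow> ev f (\<eta> ^ j) = 0"
proof (induction j rule: less_induct)
  case (less j)
  show ?case
  proof (cases "j = 0")
    case True
    then have "n = 1" using less.prems by simp
    then have "\<eta> = 1" using eta by simp
    then show ?thesis using evf True by simp
  next
    case j0: False
    show ?thesis
    proof (cases "j = 1")
      case True then show ?thesis using evf by simp
    next
      case False
      obtain l where l: "prime l" "l dvd j" using prime_factor_nat[OF False] by blast
      then obtain j' where j': "j = l * j'" by (elim dvdE)
      have "j' < j" using j' j0 l prime_gt_1_nat by (cases "j' = 0") auto
      have cj: "coprime j' n" "coprime l n" using less.prems j' by (simp_all add: coprime_mult_left_iff)
      have ln: "\<not> l dvd n"
      proof
        assume "l dvd n"
        then have "l dvd gcd l n" by simp
        then show False using cj(2) l(1) by (simp add: not_prime_1)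
      qed
      define \<theta> where "\<theta> = \<eta> ^ j'"
      have th: "\<theta> ^ n = 1" unfolding \<theta>_def using eta by (metis power_mult mult.commute power_one)
      have evth: "ev f \<theta> = 0" unfolding \<theta>_def using less.IH[OF \<open>j' < j\<close> cj(1)] .
      obtain g where g: "lead_coeff g = 1" "ev g \<theta> = 0"
        "\<And>r. r \<noteq> 0 \<Longrightarrow> ev r \<theta> = 0 \<Longrightarrow> degree g \<le> degree r"
        "\<And>p. ev p \<theta> = 0 \<Longrightarrow> g dvd p"
        using minpoly_exists[OF th n] by blast
      have "ev g (\<theta> ^ l) = 0" using conj_prime[OF th n g l(1) ln] .
      moreover obtain u where "f = g * u" using g(4)[OF evth] by (elim dvdE)
      ultimately have "ev f (\<theta> ^ l) = 0" by (simp add: ev_simps)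
      moreover have "\<theta> ^ l = \<eta> ^ j" unfolding \<theta>_def j' by (metis power_mult mult.commute)
      ultimately show ?thesis by simp
    qed
  qed
qed



lemma prod_lin_dvd:
  fixes p :: "complex poly"
  assumes "finite A" "\<forall>a\<in>A. poly p a = 0"
  shows "(\<Prod>a\<in>A. [:-a, 1:]) dvd p"
  using assms
proof (induction A rule: finite_induct)
  case empty then show ?case by simp
next
  case (insert a A)
  then obtain q where q: "p = (\<Prod>a\<in>A. [:-a, 1:]) * q" by (auto elim: dvdE)
  have "poly (\<Prod>a\<in>A. [:-a, 1:]) a \<noteq> 0" using insert(1,2) by (auto simp: poly_prod)
  moreover have "poly p a = 0" using insert by simp
  ultimately have "poly q a = 0" using q by simp
  then obtain q' where qq: "q = [:-a, 1:] * q'" by (auto simp: poly_eq_0_iff_dvd elim: dvdE)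
  have pi: "(\<Prod>a\<in>insert a A. [:-a, 1:]) = [:-a, 1:] * (\<Prod>a\<in>A. [:-a, 1:])" using insert(1,2) by simp
  have "p = (\<Prod>a\<in>A. [:-a, 1:]) * ([:-a, 1:] * q')" by (simp only: q qq)
  also have "\<dots> = ([:-a, 1:] * (\<Prod>a\<in>A. [:-a, 1:])) * q'" by (simp only: mult.assoc mult.commute mult.left_commute)
  finally have "p = (\<Prod>a\<in>insert a A. [:-a, 1:]) * q'" by (simp only: pi)
  then show ?case by simp
qed

lemma sq_dvd_pderiv:
  fixes p :: "'a::idom poly"
  assumes "[:-b, 1:] ^ 2 dvd p"
  shows "poly (pderiv p) b = 0"
proof -
  from assms obtain s where "p = [:-b, 1:] ^ 2 * s" by (elim dvdE)
  then have "p = [:-b, 1:] * ([:-b, 1:] * s)" by (metis power2_eq_square mult.assoc)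
  then have "pderiv p = [:-b, 1:] * pderiv ([:-b, 1:] * s) + ([:-b, 1:] * s) * pderiv [:-b, 1:]"
    by (simp only: pderiv_mult)
  then show ?thesis by simp
qed

lemma deg_pos: "lead_coeff (f::int poly) = 1 \<Longrightarrow> ev f z = 0 \<Longrightarrow> degree f \<noteq> 0"
proof
  assume "lead_coeff f = 1" "ev f z = 0" "degree f = 0"
  then have "f = [:1:]" by (metis degree_0_id)
  then show False using \<open>ev f z = 0\<close> by (simp add: ev_simps)
qed

lemma no_sq:
  fixes f :: "int poly" and \<beta> :: complex
  assumes n: "n \<ge> 1" and fX: "f dvd monom 1 n - 1" and b: "\<beta> ^ n = 1"
  shows "\<not> [:-\<beta>, 1:] ^ 2 dvd map_poly of_int f"
proof
  assume "[:-\<beta>, 1:] ^ 2 dvd map_poly of_int f"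
  moreover have "map_poly of_int f dvd (map_poly of_int (monom 1 n - 1) :: complex poly)"
    using fX by (auto elim!: dvdE simp: mpi_mult)
  ultimately have "[:-\<beta>, 1:] ^ 2 dvd (map_poly of_int (monom 1 n - 1) :: complex poly)"
    using dvd_trans by blast
  then have "poly (pderiv (map_poly of_int (monom 1 n - 1))) \<beta> = 0" by (rule sq_dvd_pderiv)
  then have "of_nat n * \<beta> ^ (n - 1) = 0"
    by (simp add: mpi_diff mpi_monom pderiv_diff pderiv_monom pderiv_1 poly_monom)
  moreover have "\<beta> \<noteq> 0" using b n by (cases n) auto
  ultimately show False using n by simp
qed

lemma cyclo_facts:
  assumes n: "n \<ge> 1"
  shows "lead_coeff (cyclo n) = 1" "ev (cyclo n) (e_n n) = 0"
    "\<And>r. r \<noteq> 0 \<Longrightarrow> ev r (e_n n) = 0 \<Longrightarrow> degree (cyclo n) \<le> degree r"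
    "\<And>p. ev p (e_n n) = 0 \<Longrightarrow> cyclo n dvd p"
    "degree (cyclo n) = totient n"
    "order (e_n n) (map_poly of_int (cyclo n)) \<le> 1"
    "map_poly of_int (cyclo n) = cyclo_C n"
proof -
  define \<zeta> where "\<zeta> = e_n n"
  have zn: "\<zeta> ^ n = 1" using en_n[OF n] by (simp add: \<zeta>_def)
  obtain f where f: "lead_coeff f = 1" "ev f \<zeta> = 0"
    "\<And>r. r \<noteq> 0 \<Longrightarrow> ev r \<zeta> = 0 \<Longrightarrow> degree f \<le> degree r"
    "\<And>p. ev p \<zeta> = 0 \<Longrightarrow> f dvd p"
    using minpoly_exists[OF zn n] by blast
  define X :: "int poly" where "X = monom 1 n - 1"
  have evX: "ev X z = z ^ n - 1" for z by (simp add: X_def ev_simps)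
  have fX: "f dvd X" using f(4) evX zn by simp
  define J where "J = {j. 1 \<le> j \<and> j \<le> n \<and> coprime j n}"
  define A where "A = (\<lambda>j. \<zeta> ^ j) ` J"
  have finJ: "finite J" by (simp add: J_def)
  have inj: "inj_on (\<lambda>j. \<zeta> ^ j) J"
  proof (rule inj_onI)
    fix i j assume ij: "i \<in> J" "j \<in> J" "\<zeta> ^ i = \<zeta> ^ j"
    then have "i mod n = j mod n" using en_eq[OF n] by (simp add: \<zeta>_def)
    moreover have "i \<le> n" "j \<le> n" "1 \<le> i" "1 \<le> j" using ij by (auto simp: J_def)
    ultimately show "i = j"
      by (metis le_neq_implies_less mod_less mod_self not_one_le_zero le_trans)
  qed
  have PhiA: "cyclo_C n = (\<Prod>a\<in>A. [:-a, 1:])"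
    unfolding cyclo_C_def A_def J_def[symmetric] \<zeta>_def[symmetric]
    using inj by (simp add: prod.reindex J_def \<zeta>_def)
  have cardA: "card A = totient n"
  proof -
    have "card A = card J" unfolding A_def using inj by (rule card_image)
    also have "J = totatives n" by (auto simp: J_def totatives_def)
    finally show ?thesis by (simp add: totient_def)
  qed
  have finA: "finite A" using finJ by (simp add: A_def)
  have rootsA: "\<forall>a\<in>A. poly (map_poly of_int f) a = 0"
    using conj_all[OF zn n f(2)] by (auto simp: A_def J_def)
  obtain u where u: "map_poly of_int f = cyclo_C n * u"
    using prod_lin_dvd[OF finA rootsA] PhiA by (auto elim: dvdE)
  have lcPhi: "lead_coeff (cyclo_C n) = 1" by (simp add: PhiA lead_coeff_prod)
  have f0: "f \<noteq> 0" using f(1) by auto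
  have degf: "degree f \<noteq> 0" using deg_pos f(1,2) by blast
  have nosq: "\<not> [:-\<beta>, 1:] ^ 2 dvd map_poly of_int f" if "\<beta> ^ n = 1" for \<beta> :: complex
    using no_sq[of n f \<beta>] n fX that by (simp add: X_def)
  have du: "degree u = 0"
  proof (rule ccontr)
    assume "degree u \<noteq> 0"
    then obtain \<beta> where \<beta>: "poly u \<beta> = 0" using alg_closed_imp_poly_has_root by blast
    then have evfb: "ev f \<beta> = 0" using u by simp
    then have "ev X \<beta> = 0" using fX by (auto elim!: dvdE simp: ev_simps)
    then have bn: "\<beta> ^ n = 1" using evX by simp
    obtain j where j: "j < n" "\<beta> = \<zeta> ^ j" using en_roots[OF n bn] \<zeta>_def by blast
    show False
    proof (cases "coprime j n")
      case True
      define j' where "j' = (if j = 0 then n else j)"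
      have "\<zeta> ^ j' = \<beta>" using j zn by (simp add: j'_def)
      moreover have "j' \<in> J"
      proof -
        have "j = 0 \<Longrightarrow> n = 1" using True by simp
        then show ?thesis using True j n by (auto simp: J_def j'_def)
      qed
      ultimately have "\<beta> \<in> A" unfolding A_def by blast
      then have "poly (cyclo_C n) \<beta> = 0" by (simp add: PhiA poly_prod finA)
      then have "[:-\<beta>, 1:] dvd cyclo_C n" "[:-\<beta>, 1:] dvd u" using \<beta> by (simp_all add: poly_eq_0_iff_dvd)
      then have "[:-\<beta>, 1:] ^ 2 dvd map_poly of_int f" unfolding u power2_eq_square by (rule mult_dvd_mono)
      then show False using nosq[OF bn] by simp
    next
      case False
      define g where "g = gcd j n"
      have g1: "g \<noteq> 1" using False by (simp add: g_def coprime_iff_gcd_eq_1)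
      have gpos: "g > 0" using n by (simp add: g_def)
      define m where "m = n div g"
      have nm: "n = m * g" by (simp add: m_def g_def)
      have m1: "m \<ge> 1" using nm n by (cases m) auto
      have g2: "g \<ge> 2" using g1 gpos by auto
      have "m * 2 \<le> m * g" using g2 by simp
      then have mn: "m < n" using nm m1 by linarith
      obtain j2 where j2: "j = g * j2" using g_def by (metis dvdE gcd_dvd1)
      have jm: "j * m = j2 * n" by (simp only: j2 nm mult.assoc mult.commute mult.left_commute)
      have "\<beta> ^ m = \<zeta> ^ (j * m)" using j by (simp add: power_mult)
      also have "\<dots> = (\<zeta> ^ n) ^ j2" by (metis jm power_mult mult.commute)
      finally have bm: "\<beta> ^ m = 1" using zn by simp
      obtain h where h: "lead_coeff h = 1" "ev h \<beta> = 0"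
        "\<And>r. r \<noteq> 0 \<Longrightarrow> ev r \<beta> = 0 \<Longrightarrow> degree h \<le> degree r"
        "\<And>p. ev p \<beta> = 0 \<Longrightarrow> h dvd p"
        using minpoly_exists[OF bn n] by blast
      obtain v where v: "f = h * v" using h(4)[OF evfb] by (elim dvdE)
      have "ev h \<zeta> * ev v \<zeta> = 0" using f(2) v by (simp add: ev_simps)
      then have "ev v \<zeta> = 0 \<or> ev h \<zeta> = 0" by auto
      then show False
      proof
        assume "ev v \<zeta> = 0"
        moreover have "v \<noteq> 0" using v f0 by auto
        ultimately have "degree f \<le> degree v" using f(3) by blast
        moreover have "degree f = degree h + degree v" using v f0 by (simp add: degree_mult_eq)
        moreover have "degree h \<noteq> 0" using deg_pos h(1,2) by blast
        ultimately show False by simp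
      next
        assume "ev h \<zeta> = 0"
        then have "f dvd h" by (rule f(4))
        moreover have "h dvd monom 1 m - 1" using h(4) bm by (simp add: ev_simps)
        ultimately have "f dvd monom 1 m - 1" by (rule dvd_trans)
        then obtain w where w: "monom 1 m - 1 = f * w" by (elim dvdE)
        have "ev (monom 1 m - 1) \<zeta> = ev f \<zeta> * ev w \<zeta>" unfolding w by (rule ev_simps(3))
        then have "\<zeta> ^ m = 1" using f(2) by (simp add: ev_simps)
        then have "n dvd m" using en_eq1[OF n] by (simp add: \<zeta>_def)
        then show False using mn m1 by (simp add: nat_dvd_not_less)
      qed
    qed
  qed
  then obtain c where "u = [:c:]" by (metis degree_0_id)
  moreover have "lead_coeff (map_poly of_int f :: complex poly) = 1" using f(1) by (simp add: degree_mpi coeff_map_poly)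
  then have "lead_coeff (cyclo_C n) * lead_coeff u = 1" by (simp only: u lead_coeff_mult)
  then have "lead_coeff u = 1" using lcPhi by simp
  ultimately have "c = 1" by simp
  with \<open>u = [:c:]\<close> u have fPhi: "map_poly of_int f = cyclo_C n" by simp
  have cyc: "cyclo n = f"
    unfolding cyclo_def
  proof (rule the_equality)
    show "map_poly of_int f = cyclo_C n" by (rule fPhi)
    fix p assume "map_poly of_int p = cyclo_C n"
    then have "map_poly of_int p = (map_poly of_int f :: complex poly)" using fPhi by simp
    then show "p = f" by (rule mpi_inj)
  qed
  show "lead_coeff (cyclo n) = 1" "ev (cyclo n) (e_n n) = 0"
    "\<And>r. r \<noteq> 0 \<Longrightarrow> ev r (e_n n) = 0 \<Longrightarrow> degree (cyclo n) \<le> degree r"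
    "\<And>p. ev p (e_n n) = 0 \<Longrightarrow> cyclo n dvd p"
    "map_poly of_int (cyclo n) = cyclo_C n"
    using f fPhi by (simp_all add: cyc \<zeta>_def)
  show "degree (cyclo n) = totient n"
  proof -
    have "degree (cyclo_C n) = (\<Sum>a\<in>A. degree [:-a, 1:])"
      unfolding PhiA by (rule degree_prod_eq_sum_degree) auto
    also have "\<dots> = card A" by simp
    finally show ?thesis using cardA fPhi cyc by (metis degree_mpi)
  qed
  show "order (e_n n) (map_poly of_int (cyclo n)) \<le> 1"
  proof (rule ccontr)
    assume "\<not> ?thesis"
    then have "[:-\<zeta>, 1:] ^ 2 dvd map_poly of_int f"
      using order_divides[of \<zeta> 2 "map_poly of_int f"] by (simp add: cyc \<zeta>_def)
    then show False using nosq[OF zn] by simp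
  qed
qed



lemma Zen_ev: "ev p (e_n n) \<in> Zen n"
  unfolding Zen_def by blast

lemma Zen_cases: "z \<in> Zen n \<Longrightarrow> \<exists>p. z = ev p (e_n n)"
  unfolding Zen_def by blast

lemma Zen_add: "a \<in> Zen n \<Longrightarrow> b \<in> Zen n \<Longrightarrow> a + b \<in> Zen n"
proof -
  assume "a \<in> Zen n" "b \<in> Zen n"
  then obtain p q where "a = ev p (e_n n)" "b = ev q (e_n n)" using Zen_cases by metis
  then have "a + b = ev (p + q) (e_n n)" by (simp add: ev_simps)
  then show ?thesis using Zen_ev by metis
qed

lemma Zen_mult: "a \<in> Zen n \<Longrightarrow> b \<in> Zen n \<Longrightarrow> a * b \<in> Zen n"
proof -
  assume "a \<in> Zen n" "b \<in> Zen n"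
  then obtain p q where "a = ev p (e_n n)" "b = ev q (e_n n)" using Zen_cases by metis
  then have "a * b = ev (p * q) (e_n n)" by (simp add: ev_simps)
  then show ?thesis using Zen_ev by metis
qed

lemma Zen_diff: "a \<in> Zen n \<Longrightarrow> b \<in> Zen n \<Longrightarrow> a - b \<in> Zen n"
proof -
  assume "a \<in> Zen n" "b \<in> Zen n"
  then obtain p q where "a = ev p (e_n n)" "b = ev q (e_n n)" using Zen_cases by metis
  then have "a - b = ev (p - q) (e_n n)" by (simp add: ev_simps)
  then show ?thesis using Zen_ev by metis
qed

lemma Zen_of_int: "of_int c \<in> Zen n"
proof -
  have "ev [:c:] (e_n n) = of_int c" by (simp add: ev_simps)
  then show ?thesis by (metis Zen_ev)
qed

lemma Zen_0: "0 \<in> Zen n" using Zen_of_int[of 0 n] by simp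
lemma Zen_1: "1 \<in> Zen n" using Zen_of_int[of 1 n] by simp

lemma Zen_pow: "e_n n ^ j \<in> Zen n"
proof -
  have "ev (monom 1 j) (e_n n) = e_n n ^ j" by (simp add: ev_simps)
  then show ?thesis by (metis Zen_ev)
qed

lemma Zen_sum: "finite A \<Longrightarrow> (\<And>i. i \<in> A \<Longrightarrow> f i \<in> Zen n) \<Longrightarrow> sum f A \<in> Zen n"
  by (induction A rule: finite_induct) (auto intro: Zen_add Zen_0)

lemma Zen_poly_add: "p \<in> Zen_poly n \<Longrightarrow> q \<in> Zen_poly n \<Longrightarrow> p + q \<in> Zen_poly n"
  by (auto simp: Zen_poly_def intro: Zen_add)

lemma Zen_poly_mult: "p \<in> Zen_poly n \<Longrightarrow> q \<in> Zen_poly n \<Longrightarrow> p * q \<in> Zen_poly n"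
  by (auto simp: Zen_poly_def coeff_mult intro!: Zen_sum Zen_mult)

lemma Zen_poly_diff: "p \<in> Zen_poly n \<Longrightarrow> q \<in> Zen_poly n \<Longrightarrow> p - q \<in> Zen_poly n"
  by (auto simp: Zen_poly_def intro: Zen_diff)

lemma Zen_poly_monom: "z \<in> Zen n \<Longrightarrow> monom z k \<in> Zen_poly n"
  by (auto simp: Zen_poly_def coeff_monom Zen_0)

lemma Zen_poly_const: "z \<in> Zen n \<Longrightarrow> [:z:] \<in> Zen_poly n"
  using Zen_poly_monom[of z n 0] by (simp add: monom_0)

lemma Zen_poly_1: "1 \<in> Zen_poly n"
  using Zen_poly_const[OF Zen_1] by (simp add: one_pCons)

lemma Zen_poly_0: "0 \<in> Zen_poly n"
  by (simp add: Zen_poly_def Zen_0)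

lemma Zen_poly_power: "p \<in> Zen_poly n \<Longrightarrow> p ^ k \<in> Zen_poly n"
  by (induction k) (auto intro: Zen_poly_mult Zen_poly_1)

lemma Zen_poly_sum: "finite A \<Longrightarrow> (\<And>i. i \<in> A \<Longrightarrow> f i \<in> Zen_poly n) \<Longrightarrow> sum f A \<in> Zen_poly n"
  by (induction A rule: finite_induct) (auto intro: Zen_poly_add Zen_poly_0)

lemma hom0_Zen: "hom0 n p \<in> Zen_poly n"
proof -
  have lin: "[:e_n n, 1:] \<in> Zen_poly n"
  proof -
    have "[:e_n n, 1:] = [:e_n n:] + monom 1 1" by (simp add: monom_altdef)
    then show ?thesis using Zen_pow[of n 1] Zen_1
      by (metis Zen_poly_add Zen_poly_const Zen_poly_monom power_one_right)
  qed
  show ?thesis unfolding hom0_def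
  proof (induction p)
    case 0 then show ?case using Zen_poly_0 by simp
  next
    case (pCons a p)
    have "pcompose (map_poly of_int (pCons a p)) [:e_n n, 1:]
      = [:of_int a:] + [:e_n n, 1:] * pcompose (map_poly of_int p) [:e_n n, 1:]"
      by (simp add: mpi_pCons pcompose_pCons)
    then show ?case using pCons lin
      by (metis Zen_poly_add Zen_poly_mult Zen_poly_const Zen_of_int)
  qed
qed

lemma shift_Zen:
  assumes "P \<in> Zen_poly n" "\<And>m. m < k \<Longrightarrow> coeff P m = 0"
  shows "P = monom 1 k * poly_shift k P \<and> poly_shift k P \<in> Zen_poly n"
proof
  show "P = monom 1 k * poly_shift k P"
    by (rule poly_eqI) (auto simp: coeff_monom_mult coeff_poly_shift assms(2))
  show "poly_shift k P \<in> Zen_poly n" using assms(1) by (simp add: Zen_poly_def coeff_poly_shift)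
qed

lemma coeff_sum_monom: "coeff (\<Sum>i<N. monom (c i) i) m = (if m < N then c m else 0)"
  by (simp add: coeff_sum coeff_monom)

lemma degree_sum_monom: "N > 0 \<Longrightarrow> degree (\<Sum>i<N. monom (c i) i) < N"
proof (rule ccontr)
  assume N: "N > 0" and "\<not> degree (\<Sum>i<N. monom (c i) i) < N"
  then have "degree (\<Sum>i<N. monom (c i) i) \<ge> N" by simp
  moreover have "coeff (\<Sum>i<N. monom (c i) i) (degree (\<Sum>i<N. monom (c i) i)) \<noteq> 0"
    using N calculation by (metis leading_coeff_0_iff degree_0 not_le)
  ultimately show False by (simp add: coeff_sum_monom)
qed

lemma sum_monom_eq: "(degree r < N \<or> r = 0) \<Longrightarrow> (\<Sum>i<N. monom (coeff r i) i) = r"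
  by (rule poly_eqI) (auto simp: coeff_sum_monom coeff_eq_0)

lemma Zen_reduce:
  assumes n: "n \<ge> 1" and z: "z \<in> Zen n"
  shows "\<exists>r. degree r < totient n \<and> ev r (e_n n) = z"
proof -
  obtain p where p: "z = ev p (e_n n)" using Zen_cases[OF z] by blast
  have c0: "cyclo n \<noteq> 0" using cyclo_facts(1)[OF n] by auto
  obtain s r where pd: "pseudo_divmod p (cyclo n) = (s, r)" by fastforce
  from pseudo_divmod[OF c0 pd] cyclo_facts(1)[OF n]
  have eq: "p = cyclo n * s + r" and rd: "r = 0 \<or> degree r < degree (cyclo n)" by simp_all
  have tp: "totient n > 0" using n by simp
  have "degree r < totient n" using rd tp cyclo_facts(5)[OF n] by auto
  moreover have "ev r (e_n n) = z" using eq p cyclo_facts(2)[OF n] by (simp add: ev_simps)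
  ultimately show ?thesis by blast
qed

lemma mpi_sum: "map_poly (of_int::int\<Rightarrow>'a::comm_ring_1) (sum f A) = (\<Sum>i\<in>A. map_poly of_int (f i))"
  by (rule poly_eqI) (simp add: coeff_map_poly coeff_sum)

lemma Zen_indep:
  assumes n: "n \<ge> 1" and s: "(\<Sum>j<totient n. of_int (c j) * e_n n ^ j) = 0"
  shows "\<forall>j<totient n. c j = 0"
proof -
  define r where "r = (\<Sum>j<totient n. monom (c j) j)"
  have "ev r (e_n n) = (\<Sum>j<totient n. of_int (c j) * e_n n ^ j)"
    by (simp add: r_def mpi_monom poly_monom mpi_sum poly_sum)
  then have evr: "ev r (e_n n) = 0" using s by simp
  have tp: "totient n > 0" using n by simp
  have "r = 0"
  proof (rule ccontr)
    assume "r \<noteq> 0"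
    then have "degree (cyclo n) \<le> degree r" using cyclo_facts(3)[OF n] evr by blast
    moreover have "degree r < totient n" unfolding r_def using tp by (rule degree_sum_monom)
    ultimately show False using cyclo_facts(5)[OF n] by simp
  qed
  then show ?thesis using coeff_sum_monom[of c "totient n"] unfolding r_def[symmetric] by (metis coeff_0)
qed

lemma pcompose_power': "pcompose (p ^ k) q = (pcompose p q) ^ k"
  by (induction k) (simp_all add: pcompose_mult pcompose_1)

lemma pcompose_monom1: "pcompose (monom 1 k) q = q ^ k"
  by (simp add: monom_altdef pcompose_power' pcompose_pCons)



lemma idealE_iff: "p \<in> ideal_E n k \<longleftrightarrow> cyclo n ^ k dvd p"
  by (auto simp: ideal_E_def dvd_def)

lemma of_int_monom_int: "of_int c * monom 1 i = (monom c i :: int poly)"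
  by (simp add: of_int_poly smult_monom)

lemma of_int_monom_cpx: "of_int c * monom a i = (monom (of_int c * a) i :: complex poly)"
  by (simp add: of_int_poly smult_monom)

lemma partE:
  assumes n: "n \<ge> 1" and k: "k \<ge> 1"
  shows "quotient_free_Z_rank (UNIV :: int poly set) (ideal_E n k) (k * totient n)"
proof -
  define f where "f = cyclo n"
  define N where "N = k * totient n"
  have lcf: "lead_coeff f = 1" using cyclo_facts(1)[OF n] by (simp add: f_def)
  have f0: "f \<noteq> 0" using lcf by auto
  have lcfk: "lead_coeff (f ^ k) = 1" using lcf by (simp add: lead_coeff_power)
  have fk0: "f ^ k \<noteq> 0" using f0 by simp
  have degfk: "degree (f ^ k) = N" using f0 cyclo_facts(5)[OF n]
    by (simp add: degree_power_eq N_def f_def)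
  have Npos: "N > 0" using n k by (simp add: N_def)
  define b :: "nat \<Rightarrow> int poly" where "b i = monom 1 i" for i
  have sumb: "(\<Sum>i<N. of_int (c i) * b i) = (\<Sum>i<N. monom (c i) i)" for c
    by (simp add: b_def of_int_monom_int)
  show ?thesis unfolding quotient_free_Z_rank_def N_def[symmetric]
  proof (intro exI[of _ b] conjI ballI allI impI)
    fix a :: "int poly"
    obtain q r where pd: "pseudo_divmod a (f ^ k) = (q, r)" by fastforce
    from pseudo_divmod[OF fk0 pd] lcfk
    have eq: "a = f ^ k * q + r" and rd: "r = 0 \<or> degree r < N" using degfk by simp_all
    have "(\<Sum>i<N. of_int (coeff r i) * b i) = r" unfolding sumb using rd by (intro sum_monom_eq) auto
    then have "a - (\<Sum>i<N. of_int (coeff r i) * b i) = f ^ k * q" using eq by simp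
    then show "\<exists>c. a - (\<Sum>i<N. of_int (c i) * b i) \<in> ideal_E n k"
      unfolding idealE_iff f_def[symmetric] by (metis dvd_triv_left)
  next
    fix c :: "nat \<Rightarrow> int" and i :: nat
    assume mem: "(\<Sum>i<N. of_int (c i) * b i) \<in> ideal_E n k" and i: "i < N"
    define R where "R = (\<Sum>i<N. monom (c i) i)"
    obtain s where s: "R = f ^ k * s" using mem unfolding idealE_iff sumb R_def[symmetric] f_def[symmetric]
      by (elim dvdE)
    have "s = 0"
    proof (rule ccontr)
      assume "s \<noteq> 0"
      then have "degree R = N + degree s" using s fk0 degfk by (simp add: degree_mult_eq)
      moreover have "degree R < N" unfolding R_def using Npos by (rule degree_sum_monom)
      ultimately show False by simp
    qed
    then have "R = 0" using s by simp
    then have "coeff R i = 0" by simp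
    then show "c i = 0" using i by (simp add: R_def coeff_sum_monom)
  qed auto
qed

lemma hom0_1: "hom0 n 1 = 1"
  by (simp add: hom0_def pcompose_1)

lemma hom0_add: "hom0 n (p + q) = hom0 n p + hom0 n q"
  by (simp add: hom0_def mpi_add pcompose_add)

lemma hom0_mult: "hom0 n (p * q) = hom0 n p * hom0 n q"
  by (simp add: hom0_def mpi_mult pcompose_mult)

lemma hom0_power: "hom0 n (p ^ k) = hom0 n p ^ k"
  by (simp add: hom0_def mpi_power pcompose_power')

lemma monom1_power: "(monom 1 1 :: 'a::comm_semiring_1 poly) ^ k = monom 1 k"
  by (induction k) (simp_all add: mult_monom monom_0 one_pCons)

lemma part_fwd:
  assumes n: "n \<ge> 1" and p: "p \<in> ideal_E n k"
  shows "hom0 n p \<in> ideal_G n k"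
proof -
  obtain s where s: "p = cyclo n ^ k * s" using p by (auto simp: idealE_iff elim: dvdE)
  define Hf where "Hf = hom0 n (cyclo n)"
  have HZ: "Hf \<in> Zen_poly n" by (simp add: Hf_def hom0_Zen)
  have "coeff Hf 0 = poly Hf 0" by (simp add: poly_0_coeff_0)
  also have "\<dots> = ev (cyclo n) (e_n n)" by (simp add: Hf_def hom0_def poly_pcompose)
  also have "\<dots> = 0" by (rule cyclo_facts(2)[OF n])
  finally have "coeff Hf 0 = 0" .
  then obtain t where t: "Hf = monom 1 1 * t" "t \<in> Zen_poly n"
    using shift_Zen[OF HZ, of 1] by auto
  have "hom0 n p = Hf ^ k * hom0 n s" by (simp add: s hom0_mult hom0_power Hf_def)
  also have "\<dots> = monom 1 k * (t ^ k * hom0 n s)" by (simp only: t power_mult_distrib monom1_power mult.assoc)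
  finally show ?thesis unfolding ideal_G_def
    using t(2) hom0_Zen by (blast intro: Zen_poly_mult Zen_poly_power)
qed

lemma back_ind:
  assumes n: "n \<ge> 1"
  shows "[:-e_n n, 1:] ^ k dvd map_poly of_int p \<Longrightarrow> cyclo n ^ k dvd p"
proof (induction k arbitrary: p)
  case 0 then show ?case by simp
next
  case (Suc k)
  define \<zeta> where "\<zeta> = e_n n"
  have "[:-\<zeta>, 1:] dvd map_poly of_int p" using Suc.prems unfolding \<zeta>_def
    by (metis dvd_power dvd_trans zero_less_Suc)
  then have "ev p \<zeta> = 0" by (simp add: poly_eq_0_iff_dvd)
  then obtain p1 where p1: "p = cyclo n * p1" using cyclo_facts(4)[OF n] unfolding \<zeta>_def by (auto elim: dvdE)
  show ?case
  proof (cases "p1 = 0")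
    case True then show ?thesis using p1 by simp
  next
    case False
    have c0: "cyclo n \<noteq> 0" using cyclo_facts(1)[OF n] by auto
    have mp: "map_poly of_int p = map_poly of_int (cyclo n) * (map_poly of_int p1 :: complex poly)"
      using p1 by (simp add: mpi_mult)
    have nz: "map_poly of_int (cyclo n) * (map_poly of_int p1 :: complex poly) \<noteq> 0"
      using c0 False by (metis mp map_poly_eq_0_iff mult_eq_0_iff of_int_eq_0_iff coeff_map_poly p1 leading_coeff_0_iff)
    have "map_poly of_int p = (0::complex poly) \<or> Suc k \<le> order \<zeta> (map_poly of_int p)"
      using Suc.prems unfolding order_divides \<zeta>_def .
    then have "Suc k \<le> order \<zeta> (map_poly of_int p)" using nz mp by auto
    also have "\<dots> = order \<zeta> (map_poly of_int (cyclo n)) + order \<zeta> (map_poly of_int p1)"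
      using mp nz by (simp add: order_mult)
    finally have "k \<le> order \<zeta> (map_poly of_int p1)"
      using cyclo_facts(6)[OF n] unfolding \<zeta>_def by simp
    then have "[:-\<zeta>, 1:] ^ k dvd map_poly of_int p1" unfolding order_divides by blast
    then have "cyclo n ^ k dvd p1" using Suc.IH unfolding \<zeta>_def by blast
    then show ?thesis using p1 by simp
  qed
qed

lemma part_bwd:
  assumes n: "n \<ge> 1" and h: "hom0 n p \<in> ideal_G n k"
  shows "p \<in> ideal_E n k"
proof -
  obtain s where s: "hom0 n p = monom 1 k * s" using h by (auto simp: ideal_G_def)
  define L :: "complex poly" where "L = [:-e_n n, 1:]"
  have "pcompose [:e_n n, 1:] L = [:0, 1:]" by (simp add: L_def pcompose_pCons)
  then have "map_poly of_int p = pcompose (hom0 n p) L"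
    by (simp add: hom0_def pcompose_assoc[symmetric] pcompose_idR)
  also have "\<dots> = L ^ k * pcompose s L" by (simp add: s pcompose_mult pcompose_monom1)
  finally have "L ^ k dvd map_poly of_int p" by simp
  then show ?thesis unfolding idealE_iff using back_ind[OF n] L_def by blast
qed



lemma sum_blocks: "(\<Sum>i<k * D. g i) = (\<Sum>m<k. \<Sum>j<D. g (m * D + (j::nat)))"
proof (induction k)
  case 0 then show ?case by simp
next
  case (Suc k)
  have split: "{..<Suc k * D} = {..<k * D} \<union> {k * D..<k * D + D}" by auto
  have "(\<Sum>i<Suc k * D. g i) = (\<Sum>i<k * D. g i) + (\<Sum>i\<in>{k * D..<k * D + D}. g i)"
    unfolding split by (rule sum.union_disjoint) auto
  also have "(\<Sum>i\<in>{k * D..<k * D + D}. g i) = (\<Sum>j<D. g (k * D + j))"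
  proof -
    have "(\<Sum>i\<in>{k * D..<k * D + D}. g i) = (\<Sum>i\<in>{0 + k * D..<D + k * D}. g i)" by (simp add: add.commute)
    also have "\<dots> = (\<Sum>j=0..<D. g (j + k * D))" by (rule sum.shift_bounds_nat_ivl)
    finally show ?thesis by (simp add: atLeast0LessThan add.commute)
  qed
  finally show ?case using Suc by simp
qed

lemma coeffG:
  fixes c :: "nat \<Rightarrow> int" and z :: complex
  assumes D: "D > 0"
  shows "coeff (\<Sum>i<k * D. of_int (c i) * monom (z ^ (i mod D)) (i div D)) m
       = (if m < k then \<Sum>j<D. of_int (c (m * D + j)) * z ^ j else 0)"
proof -
  have "coeff (\<Sum>i<k * D. of_int (c i) * monom (z ^ (i mod D)) (i div D)) m
      = (\<Sum>i<k * D. if i div D = m then of_int (c i) * z ^ (i mod D) else 0)"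
    by (simp add: coeff_sum of_int_monom_cpx coeff_monom)
  also have "\<dots> = (\<Sum>m'<k. \<Sum>j<D. if (m' * D + j) div D = m then of_int (c (m' * D + j)) * z ^ ((m' * D + j) mod D) else 0)"
    by (rule sum_blocks)
  also have "\<dots> = (\<Sum>m'<k. if m' = m then (\<Sum>j<D. of_int (c (m' * D + j)) * z ^ j) else 0)"
  proof (rule sum.cong[OF refl])
    fix m' assume "m' \<in> {..<k}"
    have "(\<Sum>j<D. if (m' * D + j) div D = m then of_int (c (m' * D + j)) * z ^ ((m' * D + j) mod D) else 0)
        = (\<Sum>j<D. if m' = m then of_int (c (m' * D + j)) * z ^ j else 0)"
    proof (rule sum.cong[OF refl])
      fix j assume "j \<in> {..<D}"
      then have "(m' * D + j) div D = m'" "(m' * D + j) mod D = j" using D by auto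
      then show "(if (m' * D + j) div D = m then of_int (c (m' * D + j)) * z ^ ((m' * D + j) mod D) else 0)
        = (if m' = m then of_int (c (m' * D + j)) * z ^ j else 0)" by simp
    qed
    also have "\<dots> = (if m' = m then (\<Sum>j<D. of_int (c (m' * D + j)) * z ^ j) else 0)" by simp
    finally show "(\<Sum>j<D. if (m' * D + j) div D = m then of_int (c (m' * D + j)) * z ^ ((m' * D + j) mod D) else 0)
        = (if m' = m then (\<Sum>j<D. of_int (c (m' * D + j)) * z ^ j) else 0)" .
  qed
  also have "\<dots> = (if m < k then \<Sum>j<D. of_int (c (m * D + j)) * z ^ j else 0)"
    by (simp add: sum.delta)
  finally show ?thesis .
qed

lemma ev_low:
  assumes "degree r < D"
  shows "ev r z = (\<Sum>j<D. of_int (coeff r j) * z ^ j)"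
proof -
  have "r = (\<Sum>j<D. monom (coeff r j) j)" using assms by (simp add: sum_monom_eq)
  then have "ev r z = ev (\<Sum>j<D. monom (coeff r j) j) z" by simp
  also have "\<dots> = (\<Sum>j<D. of_int (coeff r j) * z ^ j)"
    by (simp add: mpi_sum poly_sum mpi_monom poly_monom)
  finally show ?thesis .
qed

lemma partG:
  assumes n: "n \<ge> 1" and k: "k \<ge> 1"
  shows "quotient_free_Z_rank (Zen_poly n) (ideal_G n k) (k * totient n)"
proof -
  define D where "D = totient n"
  define \<zeta> where "\<zeta> = e_n n"
  have D: "D > 0" using n by (simp add: D_def)
  define b :: "nat \<Rightarrow> complex poly" where "b i = monom (\<zeta> ^ (i mod D)) (i div D)" for i
  have cf: "coeff (\<Sum>i<k * D. of_int (c i) * b i) m = (if m < k then \<Sum>j<D. of_int (c (m * D + j)) * \<zeta> ^ j else 0)" for c m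
    unfolding b_def by (rule coeffG[OF D])
  have bZ: "b i \<in> Zen_poly n" for i unfolding b_def \<zeta>_def by (intro Zen_poly_monom Zen_pow)
  have sZ: "(\<Sum>i<k * D. of_int (c i) * b i) \<in> Zen_poly n" for c
    by (intro Zen_poly_sum Zen_poly_mult bZ) (simp_all add: of_int_poly Zen_poly_const Zen_of_int)
  show ?thesis unfolding quotient_free_Z_rank_def D_def[symmetric]
  proof (intro exI[of _ b] conjI ballI allI impI)
    fix i show "b i \<in> Zen_poly n" by (rule bZ)
  next
    fix a assume a: "a \<in> Zen_poly n"
    have "\<forall>m. \<exists>r. degree r < D \<and> ev r \<zeta> = coeff a m"
      using a Zen_reduce[OF n] unfolding Zen_poly_def D_def \<zeta>_def by blast
    then obtain R where R: "\<And>m. degree (R m) < D" "\<And>m. ev (R m) \<zeta> = coeff a m" by metis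
    define c where "c i = coeff (R (i div D)) (i mod D)" for i
    define P where "P = a - (\<Sum>i<k * D. of_int (c i) * b i)"
    have PZ: "P \<in> Zen_poly n" unfolding P_def using a sZ by (rule Zen_poly_diff)
    have P0: "coeff P m = 0" if "m < k" for m
    proof -
      have "(\<Sum>j<D. of_int (c (m * D + j)) * \<zeta> ^ j) = (\<Sum>j<D. of_int (coeff (R m) j) * \<zeta> ^ j)"
        by (rule sum.cong) (simp_all add: c_def D)
      also have "\<dots> = coeff a m" using ev_low[OF R(1)[of m]] R(2)[of m] by simp
      finally show ?thesis using that by (simp add: P_def cf)
    qed
    obtain s where "P = monom 1 k * s" "s \<in> Zen_poly n" using shift_Zen[OF PZ P0] by blast
    then have "P \<in> ideal_G n k" by (auto simp: ideal_G_def)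
    then show "\<exists>c. a - (\<Sum>i<k * D. of_int (c i) * b i) \<in> ideal_G n k" unfolding P_def by blast
  next
    fix c :: "nat \<Rightarrow> int" and i
    assume mem: "(\<Sum>i<k * D. of_int (c i) * b i) \<in> ideal_G n k" and i: "i < k * D"
    then obtain s where s: "(\<Sum>i<k * D. of_int (c i) * b i) = monom 1 k * s" by (auto simp: ideal_G_def)
    define m where "m = i div D"
    define j where "j = i mod D"
    have mk: "m < k" using i D by (simp add: m_def less_mult_imp_div_less)
    have jD: "j < D" using D by (simp add: j_def)
    have im: "i = m * D + j" by (simp add: m_def j_def)
    have "coeff (\<Sum>i<k * D. of_int (c i) * b i) m = 0" using s mk by (simp add: coeff_monom_mult)
    then have "(\<Sum>j<D. of_int (c (m * D + j)) * e_n n ^ j) = 0" using cf mk by (simp add: \<zeta>_def)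
    then have "\<forall>j<totient n. c (m * D + j) = 0" using Zen_indep[OF n, of "\<lambda>j. c (m * D + j)"] by (simp add: D_def)
    then show "c i = 0" using im jD by (simp add: D_def)
  qed
qed

theorem proposition10:
  fixes n k :: nat
  assumes "n \<ge> 1" and "k \<ge> 1"
  shows "quotient_free_Z_rank (UNIV :: int poly set) (ideal_E n k) (k * totient n)
       \<and> quotient_free_Z_rank (Zen_poly n) (ideal_G n k) (k * totient n)
       \<and> (\<forall>p. hom0 n p \<in> Zen_poly n)
       \<and> hom0 n 1 = 1
       \<and> (\<forall>p q. hom0 n (p + q) = hom0 n p + hom0 n q)
       \<and> (\<forall>p q. hom0 n (p * q) = hom0 n p * hom0 n q)
       \<and> (\<forall>p. p \<in> ideal_E n k \<longrightarrow> hom0 n p \<in> ideal_G n k)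
       \<and> (\<forall>p. hom0 n p \<in> ideal_G n k \<longrightarrow> p \<in> ideal_E n k)"
  using partE[OF assms] partG[OF assms] hom0_Zen hom0_1 hom0_add hom0_mult
    part_fwd[OF assms(1)] part_bwd[OF assms(1)] by blast

end
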